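(* Let $L=K_1\cup\dots\cup K_n$ be an oriented, ordered link with a surface system $\Sigma$. Let $\{b_K\}$ and $\{b_K'\}$ be two collections of base points, one on each component $K$ of $L$ (away from the intersection points of $K$ with the other surfaces), and let $m,m'\in W$ be the associated elements. Then \[m'-m\in\operatorname{span}\{v_{s,r}\mid s\neq r\},\qquad v_{s,r}=\sum_{i=1}^n\operatorname{lk}(K_i,K_r)X^{[isr]}.\]
   Context: A surface system for $L$ is a collection of embedded compact oriented surfaces $\Sigma_i\subset S^3$ with $\partial\Sigma_i=K_i$, intersecting transversally and in at most triple points. Given base points, $\widetilde w_k$ is the word in letters $\{1,\dots,n\}\times\{\pm1\}$ obtained by reading, along $K_k$ in the positive direction from its base point, the letter $i^{\varepsilon}$ for each intersection point of $K_k$ with $\Sigma_i$ ($i\ne k$), $\varepsilon$ the intersection sign. For $w=s_1^{\varepsilon_1}\cdots s_m^{\varepsilon_m}$, $e_{rs}(w)=\sum_{p<q,\,s_p=r,\,s_q=s}\varepsilon_p\varepsilon_q$. For distinct $i,j,k$, $m_{ijk}=e_{ij}(\widetilde w_k)+e_{jk}(\widetilde w_i)+e_{ki}(\widetilde w_j)$. $W=\bigwedge^3\mathbb{Z}\langle X^1,\dots,X^n\rangle$, $X^{[ijk]}=X^i\wedge X^j\wedge X^k$, and $m=\sum_{i<j<k}m_{ijk}X^{[ijk]}$ (similarly $m'$). *)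

theory Defs
  imports Main
begin

text \<open>Combinatorial data of a surface system: for each component k the word
  w_k is a list of letters (i, eps), i the index of the surface Sigma_i met, eps = +1/-1
  the intersection sign, read along K_k from the base point.\<close>

type_synonym word = "(nat \<times> int) list"

definition wf_words :: "nat \<Rightarrow> (nat \<Rightarrow> word) \<Rightarrow> bool" where
  "wf_words n ws \<longleftrightarrow> (\<forall>k\<in>{1..n}. \<forall>x\<in>set (ws k).
      fst x \<in> {1..n} \<and> fst x \<noteq> k \<and> (snd x = 1 \<or> snd x = -1))"

definition e_rs :: "nat \<Rightarrow> nat \<Rightarrow> word \<Rightarrow> int" where
  "e_rs r s w = (\<Sum>p<length w. \<Sum>q<length w.
      if p < q \<and> fst (w ! p) = r \<and> fst (w ! q) = s then snd (w ! p) * snd (w ! q) else 0)"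

definition m_ijk :: "(nat \<Rightarrow> word) \<Rightarrow> nat \<Rightarrow> nat \<Rightarrow> nat \<Rightarrow> int" where
  "m_ijk ws i j k = e_rs i j (ws k) + e_rs j k (ws i) + e_rs k i (ws j)"

text \<open>Linking number lk(K_i,K_r), the algebraic intersection number of K_r with Sigma_i,
  i.e. the signed count of letters i in w_r.\<close>
definition lk :: "(nat \<Rightarrow> word) \<Rightarrow> nat \<Rightarrow> nat \<Rightarrow> int" where
  "lk ws i r = (\<Sum>x\<leftarrow>ws r. if fst x = i then snd x else 0)"

text \<open>Elements of W = Lambda^3 Z<X^1..X^n> are represented by their coefficient functions
  on the basis X^[abc], a<b<c (value 0 on non-increasing triples).
  X3 i j k is the coefficient function of X^i \<and> X^j \<and> X^k.\<close>
definition X3 :: "nat \<Rightarrow> nat \<Rightarrow> nat \<Rightarrow> (nat \<Rightarrow> nat \<Rightarrow> nat \<Rightarrow> int)" where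
  "X3 i j k = (\<lambda>a b c. if a < b \<and> b < c \<and> {i, j, k} = {a, b, c}
      then sgn ((int j - int i) * (int k - int i) * (int k - int j)) else 0)"

definition mvec :: "nat \<Rightarrow> (nat \<Rightarrow> word) \<Rightarrow> (nat \<Rightarrow> nat \<Rightarrow> nat \<Rightarrow> int)" where
  "mvec n ws = (\<lambda>a b c. \<Sum>i\<in>{1..n}. \<Sum>j\<in>{1..n}. \<Sum>k\<in>{1..n}.
      if i < j \<and> j < k then m_ijk ws i j k * X3 i j k a b c else 0)"

definition vsr :: "nat \<Rightarrow> (nat \<Rightarrow> word) \<Rightarrow> nat \<Rightarrow> nat \<Rightarrow> (nat \<Rightarrow> nat \<Rightarrow> nat \<Rightarrow> int)" where
  "vsr n ws s r = (\<lambda>a b c. \<Sum>i\<in>{1..n}. lk ws i r * X3 i s r a b c)"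

end

theory Submission
  imports Defs
begin

definition cnt :: "nat \<Rightarrow> word \<Rightarrow> int" where
  "cnt t w = (\<Sum>x\<leftarrow>w. if fst x = t then snd x else 0)"

lemma cnt_simps[simp]: "cnt t [] = 0" "cnt t (x#w) = (if fst x = t then snd x else 0) + cnt t w"
  "cnt t (u@v) = cnt t u + cnt t v"
  by (simp_all add: cnt_def)

lemma cnt_idx: "cnt t w = (\<Sum>q<length w. if fst (w!q) = t then snd (w!q) else 0)"
  by (induction w) (simp_all add: sum.lessThan_Suc_shift nth_Cons_Suc del: sum.lessThan_Suc cong: if_cong)

lemma e_nil[simp]: "e_rs r t [] = 0" by (simp add: e_rs_def)

lemma e_cons: "e_rs r t (x#w) = (if fst x = r then snd x * cnt t w else 0) + e_rs r t w"
  unfolding e_rs_def cnt_idx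
  by (simp add: sum.lessThan_Suc_shift sum_distrib_left if_distrib del: sum.lessThan_Suc cong: if_cong)

lemma e_app: "e_rs r t (u@v) = e_rs r t u + e_rs r t v + cnt r u * cnt t v"
  by (induction u) (auto simp: e_cons algebra_simps)

lemma cnt_rot[simp]: "cnt t (rotate d w) = cnt t w"
  by (metis append_take_drop_id cnt_simps(3) add.commute rotate_drop_take)

lemma e_rot: "e_rs r t (rotate d w) - e_rs r t w =
   cnt t (take (d mod length w) w) * cnt r w - cnt r (take (d mod length w) w) * cnt t w"
proof -
  define u where "u = take (d mod length w) w"
  define v where "v = drop (d mod length w) w"
  have w: "w = u @ v" by (simp add: u_def v_def)
  have "rotate d w = v @ u" by (simp add: rotate_drop_take u_def v_def)
  then have "e_rs r t (rotate d w) - e_rs r t w = e_rs r t (v@u) - e_rs r t (u@v)" using w by simp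
  also have "\<dots> = cnt t u * cnt r (u@v) - cnt r u * cnt t (u@v)" by (simp add: e_app algebra_simps)
  finally have X: "e_rs r t (rotate d w) - e_rs r t w = cnt t u * cnt r (u@v) - cnt r u * cnt t (u@v)" .
  show ?thesis unfolding u_def[symmetric] using X by (simp only: w[symmetric])
qed

lemma setperm:
  fixes a b c i j k :: nat
  assumes "a < b" "b < c" "{i,j,k} = {a,b,c}"
  shows "(i=a \<and> j=b \<and> k=c) \<or> (i=a \<and> j=c \<and> k=b) \<or> (i=b \<and> j=a \<and> k=c)
     \<or> (i=b \<and> j=c \<and> k=a) \<or> (i=c \<and> j=a \<and> k=b) \<or> (i=c \<and> j=b \<and> k=a)"
proof -
  have i: "i = a \<or> i = b \<or> i = c" and j: "j = a \<or> j = b \<or> j = c" and k: "k = a \<or> k = b \<or> k = c" using assms(3) by blast+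
  have A: "a = i \<or> a = j \<or> a = k" and B: "b = i \<or> b = j \<or> b = k" and C: "c = i \<or> c = j \<or> c = k" using assms(3) by blast+
  show ?thesis using i j k A B C assms(1,2) by fastforce
qed

lemma sg: "(a::nat) < b \<Longrightarrow> sgn (int b - int a) = 1" "(a::nat) < b \<Longrightarrow> sgn (int a - int b) = -1"
  by simp_all
lemma X3_perm:
  assumes "a < b" "b < c"
  shows "(if a < b \<and> b < c \<and> {i, j, k} = {a, b, c}
      then sgn ((int j - int i) * (int k - int i) * (int k - int j)) else 0) = (if i=a \<and> j=b \<and> k=c then 1 else if i=a \<and> j=c \<and> k=b then -1
     else if i=b \<and> j=a \<and> k=c then -1 else if i=b \<and> j=c \<and> k=a then 1
     else if i=c \<and> j=a \<and> k=b then 1 else if i=c \<and> j=b \<and> k=a then -1 else (0::int))"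
proof (cases "{i,j,k} = {a,b,c}")
  case True
  from setperm[OF assms True] assms show ?thesis
    by (elim disjE) (simp_all add: sgn_mult sg insert_commute)
next
  case False
  then show ?thesis using assms by (auto simp: insert_commute)
qed

lemma X3_eq:
  assumes "a < b" "b < c"
  shows "X3 i j k a b c = (if i=a \<and> j=b \<and> k=c then 1 else if i=a \<and> j=c \<and> k=b then -1
     else if i=b \<and> j=a \<and> k=c then -1 else if i=b \<and> j=c \<and> k=a then 1
     else if i=c \<and> j=a \<and> k=b then 1 else if i=c \<and> j=b \<and> k=a then -1 else 0)"
  unfolding X3_def using X3_perm[OF assms] by simp

lemma triple_delta:
  assumes "finite A" shows "(\<Sum>x\<in>A. \<Sum>y\<in>A. \<Sum>z\<in>A. if x=p \<and> y=q \<and> z=r then (v::int) else 0)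
     = (if p\<in>A \<and> q\<in>A \<and> r\<in>A then v else 0)"
proof -
  note A = assms
  have 1: "(\<Sum>z\<in>A. if x=p \<and> y=q \<and> z=r then v else 0) = (if x=p \<and> y=q then (if r\<in>A then v else 0) else 0)" for x y
    using A by (cases "x=p \<and> y=q") auto
  have 2: "(\<Sum>y\<in>A. if x=p \<and> y=q then w else 0) = (if x=p then (if q\<in>A then w else 0) else 0)" for x and w :: int
    using A by (cases "x=p") simp_all
  show ?thesis using A by (simp add: 1 2)
qed

lemma mvec_eq:
  assumes "a < b" "b < c"
  shows "mvec n ws a b c = (if a\<in>{1..n} \<and> b\<in>{1..n} \<and> c\<in>{1..n} then m_ijk ws a b c else 0)"
proof -
  have "\<And>i j k. (if i < j \<and> j < k then m_ijk ws i j k * X3 i j k a b c else 0)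
     = (if i=a \<and> j=b \<and> k=c then m_ijk ws a b c else 0)"
    using assms by (auto simp: X3_eq)
  then show ?thesis unfolding mvec_def using triple_delta[of "{1..n}" a b c] by simp
qed

lemma vsr_sum:
  assumes "a < b" "b < c"
  shows "(\<Sum>s\<in>{1..n}. \<Sum>r\<in>{1..n}. if s \<noteq> r then coef s r * vsr n ws s r a b c else 0)
    = (if a\<in>{1..n} \<and> b\<in>{1..n} \<and> c\<in>{1..n} then
        coef b c * lk ws a c - coef c b * lk ws a b - coef a c * lk ws b c
        + coef c a * lk ws b a + coef a b * lk ws c b - coef b a * lk ws c a else 0)"
proof -
  let ?A = "{1..n::nat}"
  define I where "I = (\<lambda>s r i. 
     (if s=b \<and> r=c \<and> i=a then coef b c * lk ws a c else 0)
   + (if s=c \<and> r=b \<and> i=a then - (coef c b * lk ws a b) else 0)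
   + (if s=a \<and> r=c \<and> i=b then - (coef a c * lk ws b c) else 0)
   + (if s=c \<and> r=a \<and> i=b then coef c a * lk ws b a else 0)
   + (if s=a \<and> r=b \<and> i=c then coef a b * lk ws c b else 0)
   + (if s=b \<and> r=a \<and> i=c then - (coef b a * lk ws c a) else 0))"
  have "\<And>s r. (if s \<noteq> r then coef s r * vsr n ws s r a b c else 0) = (\<Sum>i\<in>?A. I s r i)"
  proof -
    fix s r
    have "\<And>i. coef s r * (lk ws i r * X3 i s r a b c) = I s r i"
      using assms unfolding I_def by (auto simp: X3_eq)
    moreover have "s = r \<Longrightarrow> I s r i = 0" for i using assms unfolding I_def by auto
    ultimately show "(if s \<noteq> r then coef s r * vsr n ws s r a b c else 0) = (\<Sum>i\<in>?A. I s r i)"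
      unfolding vsr_def by (auto simp: sum_distrib_left)
  qed
  then have "(\<Sum>s\<in>?A. \<Sum>r\<in>?A. if s \<noteq> r then coef s r * vsr n ws s r a b c else 0)
      = (\<Sum>s\<in>?A. \<Sum>r\<in>?A. \<Sum>i\<in>?A. I s r i)" by simp
  also have "\<dots> = (if a\<in>?A \<and> b\<in>?A \<and> c\<in>?A then
        coef b c * lk ws a c - coef c b * lk ws a b - coef a c * lk ws b c
        + coef c a * lk ws b a + coef a b * lk ws c b - coef b a * lk ws c a else 0)"
    unfolding I_def by (simp only: sum.distrib) (auto simp: triple_delta)
  finally show ?thesis .
qed

lemma lk_cnt: "lk ws i r = cnt i (ws r)" by (simp add: lk_def cnt_def)

theorem lemma5p6:
  fixes n :: nat and ws :: "nat \<Rightarrow> (nat \<times> int) list" and d :: "nat \<Rightarrow> nat"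
  assumes "wf_words n ws"
    and "\<forall>i\<in>{1..n}. \<forall>r\<in>{1..n}. i \<noteq> r \<longrightarrow> lk ws i r = lk ws r i"
  shows "\<exists>coef :: nat \<Rightarrow> nat \<Rightarrow> int. \<forall>a b c.
    mvec n (\<lambda>k. rotate (d k) (ws k)) a b c - mvec n ws a b c =
    (\<Sum>s\<in>{1..n}. \<Sum>r\<in>{1..n}. if s \<noteq> r then coef s r * vsr n ws s r a b c else 0)"
proof -
  define coef where "coef s r = cnt s (take (d r mod length (ws r)) (ws r))" for s r
  define ws' where "ws' = (\<lambda>k. rotate (d k) (ws k))"
  have key: "e_rs x y (ws' k) - e_rs x y (ws k) = coef y k * lk ws x k - coef x k * lk ws y k" for x y k
    unfolding ws'_def coef_def lk_cnt by (rule e_rot)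
  have "mvec n ws' a b c - mvec n ws a b c =
    (\<Sum>s\<in>{1..n}. \<Sum>r\<in>{1..n}. if s \<noteq> r then coef s r * vsr n ws s r a b c else 0)" for a b c
  proof (cases "a < b \<and> b < c")
    case True
    then have ab: "a < b" "b < c" by auto
    have "m_ijk ws' a b c - m_ijk ws a b c =
        coef b c * lk ws a c - coef c b * lk ws a b - coef a c * lk ws b c
        + coef c a * lk ws b a + coef a b * lk ws c b - coef b a * lk ws c a"
      using key[of a b c] key[of b c a] key[of c a b] unfolding m_ijk_def by (simp add: algebra_simps)
    then show ?thesis unfolding mvec_eq[OF ab] vsr_sum[OF ab] by simp
  next
    case False
    have z: "X3 i j k a b c = 0" for i j k using False by (auto simp: X3_def)
    show ?thesis unfolding mvec_def vsr_def by (simp only: z) (simp cong: if_cong)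
  qed
  then show ?thesis unfolding ws'_def by blast
qed

end
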